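(* Let $V$ be a finite set, $f:2^V\to\mathbb{R}$ non-decreasing and submodular, $b\ge 1$ an integer with $|V|\ge b$, and $A\subseteq V$ an advice set with $|A|=b$. Let $U$ be the output of the learning-augmented algorithm described in the context (run with arbitrary subsets $A_i\subseteq A$, $|A_i|=i$), and let $\mathrm{OPT}\subseteq V$ be any set with $|\mathrm{OPT}|=b$ maximizing $f$ among all $b$-element subsets of $V$. Then $f(U)\ge f(A)$ and \[ f(U)\;\ge\;\max_{i\in\{0,1,\dots,b-1\}}\left[f(A_i)+\frac{1-\frac1e}{\left\lceil \frac{|\mathrm{OPT}\setminus A_i|}{b-i}\right\rceil}\,\bigl(f(\mathrm{OPT}\cup A_i)-f(A_i)\bigr)\right]. \]
   Context: $f$ non-decreasing means $f(X)\le f(Y)$ for $X\subseteq Y$; submodular means $f(X\cup\{e\})-f(X)\ge f(Y\cup\{e\})-f(Y)$ for $X\subseteq Y\subseteq V$, $e\notin Y$. Learning-augmented algorithm: choose subsets $A_0,A_1,\dots,A_b$ of $A$ with $|A_i|=i$ (so $A_0=\emptyset$, $A_b=A$). For each $i\in\{0,\dots,b\}$: start with $B_i=\emptyset$; while $|B_i|<b-i$, add to $B_i$ an element $e\in V\setminus(A_i\cup B_i)$ maximizing $f(A_i\cup B_i\cup\{e\})-f(A_i\cup B_i)$. Set $U_i=A_i\cup B_i$ (so $|U_i|=b$). Output $U=U_{i^*}$ where $i^*$ maximizes $f(U_i)$ over $i\in\{0,\dots,b\}$. *)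

theory Defs
  imports Complex_Main
begin

definition nondecreasing_on :: "'a set \<Rightarrow> ('a set \<Rightarrow> real) \<Rightarrow> bool" where
  "nondecreasing_on V f \<longleftrightarrow> (\<forall>X Y. X \<subseteq> Y \<and> Y \<subseteq> V \<longrightarrow> f X \<le> f Y)"

definition submodular_on :: "'a set \<Rightarrow> ('a set \<Rightarrow> real) \<Rightarrow> bool" where
  "submodular_on V f \<longleftrightarrow> (\<forall>X Y e. X \<subseteq> Y \<and> Y \<subseteq> V \<and> e \<in> V \<and> e \<notin> Y \<longrightarrow>
      f (X \<union> {e}) - f X \<ge> f (Y \<union> {e}) - f Y)"

definition greedy_run :: "('a set \<Rightarrow> real) \<Rightarrow> 'a set \<Rightarrow> 'a set \<Rightarrow> 'a list \<Rightarrow> bool" where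
  "greedy_run f V S xs \<longleftrightarrow> distinct xs \<and> set xs \<subseteq> V - S \<and>
     (\<forall>j < length xs. \<forall>e \<in> V - (S \<union> set (take j xs)).
        f (S \<union> set (take j xs) \<union> {e}) - f (S \<union> set (take j xs))
          \<le> f (S \<union> set (take (Suc j) xs)) - f (S \<union> set (take j xs)))"

end

theory Submission
  imports Defs "HOL-Analysis.Convex"
begin

lemma exp_bound:
  fixes x :: real assumes "0 \<le> x" "x \<le> 1"
  shows "x * (1 - 1 / exp 1) \<le> 1 - exp (- x)"
proof -
  have "exp ((1 - x) *\<^sub>R 0 + x *\<^sub>R (-1)) \<le> (1 - x) * exp 0 + x * exp (-1)"
    using convex_onD[OF exp_convex, of x 0 "-1"] assms by auto
  then have "exp (- x) \<le> 1 - x + x * exp (-1)" by simp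
  moreover have "exp (-1::real) = 1 / exp 1" by (simp add: exp_minus field_simps)
  ultimately show ?thesis by (simp add: algebra_simps)
qed

lemma ndD:
  assumes "nondecreasing_on V f" "X \<subseteq> Y" "Y \<subseteq> V"
  shows "f X \<le> f Y"
proof -
  have "X \<subseteq> Y \<and> Y \<subseteq> V \<longrightarrow> f X \<le> f Y"
    using assms(1) unfolding nondecreasing_on_def by (rule spec[of _ Y, OF spec[of _ X]])
  then show ?thesis using assms(2,3) by (rule mp[OF _ conjI])
qed

lemma smD:
  assumes "submodular_on V f" "X \<subseteq> Y" "Y \<subseteq> V" "e \<in> V" "e \<notin> Y"
  shows "f (X \<union> {e}) - f X \<ge> f (Y \<union> {e}) - f Y"
proof -
  have "X \<subseteq> Y \<and> Y \<subseteq> V \<and> e \<in> V \<and> e \<notin> Y \<longrightarrow> f (X \<union> {e}) - f X \<ge> f (Y \<union> {e}) - f Y"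
    using assms(1) unfolding submodular_on_def by (rule spec[of _ e, OF spec[of _ Y, OF spec[of _ X]]])
  then show ?thesis using assms(2-5) by simp
qed

lemma sub_sum:
  assumes sub: "submodular_on V f" and X: "X \<subseteq> V" and fin: "finite E" and E: "E \<subseteq> V - X"
  shows "f (X \<union> E) - f X \<le> (\<Sum>e\<in>E. f (X \<union> {e}) - f X)"
  using fin E
proof (induction E rule: finite_induct)
  case empty then show ?case by simp
next
  case (insert e F)
  have "f ((X \<union> F) \<union> {e}) - f (X \<union> F) \<le> f (X \<union> {e}) - f X"
  proof (rule smD[OF sub])
    show "X \<subseteq> X \<union> F" by (rule Un_upper1)
    show "X \<union> F \<subseteq> V" using insert.prems X by blast
    show "e \<in> V" using insert.prems by blast
    show "e \<notin> X \<union> F" using insert.prems insert.hyps(2) by blast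
  qed
  moreover have "X \<union> insert e F = (X \<union> F) \<union> {e}" by auto
  ultimately show ?case using insert by simp
qed

lemma greedy_step:
  assumes nd: "nondecreasing_on V f" and sub: "submodular_on V f" and finV: "finite V"
    and S: "S \<subseteq> V" and T: "T \<subseteq> V" and ST: "S \<subseteq> T"
    and g: "greedy_run f V S xs" and j: "j < length xs"
  shows "f T - f (S \<union> set (take j xs)) \<le>
     real (card (T - S)) * (f (S \<union> set (take (Suc j) xs)) - f (S \<union> set (take j xs)))"
proof -
  define Sj where "Sj = S \<union> set (take j xs)"
  define Sj' where "Sj' = S \<union> set (take (Suc j) xs)"
  have xsV: "set xs \<subseteq> V" using g unfolding greedy_run_def by blast
  have t1: "set (take j xs) \<subseteq> V" using set_take_subset[of j xs] xsV by (rule order_trans)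
  have t2: "set (take (Suc j) xs) \<subseteq> V" using set_take_subset[of "Suc j" xs] xsV by (rule order_trans)
  have SjV: "Sj \<subseteq> V" unfolding Sj_def using S t1 by (rule Un_least)
  have Sj'V: "Sj' \<subseteq> V" unfolding Sj'_def using S t2 by (rule Un_least)
  have "set (take j xs) \<subseteq> set (take (Suc j) xs)" by (rule set_take_subset_set_take) simp
  then have SS: "Sj \<subseteq> Sj'" unfolding Sj_def Sj'_def by blast
  have gpos: "f Sj \<le> f Sj'" by (rule ndD[OF nd SS Sj'V])
  have gall: "\<forall>j < length xs. \<forall>e \<in> V - (S \<union> set (take j xs)).
        f (S \<union> set (take j xs) \<union> {e}) - f (S \<union> set (take j xs))
          \<le> f (S \<union> set (take (Suc j) xs)) - f (S \<union> set (take j xs))"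
    using g unfolding greedy_run_def by (rule conjunct2[OF conjunct2])
  have greedy: "\<forall>e \<in> V - Sj. f (Sj \<union> {e}) - f Sj \<le> f Sj' - f Sj"
    unfolding Sj_def Sj'_def by (intro ballI) (rule gall[rule_format, OF j])
  have s1: "f T \<le> f (Sj \<union> (T - Sj))"
  proof -
    have "T \<subseteq> Sj \<union> (T - Sj)" "Sj \<union> (T - Sj) \<subseteq> V" using SjV T by auto
    then show ?thesis by (rule ndD[OF nd])
  qed
  have s2: "f (Sj \<union> (T - Sj)) \<le> f Sj + (\<Sum>e\<in>T - Sj. f (Sj \<union> {e}) - f Sj)"
  proof -
    have "f (Sj \<union> (T - Sj)) - f Sj \<le> (\<Sum>e\<in>T - Sj. f (Sj \<union> {e}) - f Sj)"
      using finite_subset[OF T finV] T by (intro sub_sum[OF sub SjV]) auto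
    then show ?thesis by linarith
  qed
  have s3: "(\<Sum>e\<in>T - Sj. f (Sj \<union> {e}) - f Sj) \<le> real (card (T - Sj)) * (f Sj' - f Sj)"
  proof (rule sum_bounded_above)
    fix e assume "e \<in> T - Sj"
    then have "e \<in> V - Sj" using T by blast
    then show "f (Sj \<union> {e}) - f Sj \<le> f Sj' - f Sj" using greedy by blast
  qed
  have s4: "real (card (T - Sj)) * (f Sj' - f Sj) \<le> real (card (T - S)) * (f Sj' - f Sj)"
  proof -
    have sub1: "T - Sj \<subseteq> T - S" unfolding Sj_def by blast
    have "card (T - Sj) \<le> card (T - S)"
      using finite_subset[OF T finV] sub1 by (intro card_mono) auto
    then have r0: "real (card (T - Sj)) \<le> real (card (T - S))" by simp
    have g0: "0 \<le> f Sj' - f Sj" using gpos by simp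
    show ?thesis by (rule mult_right_mono[OF r0 g0])
  qed
  have "f T \<le> f Sj + real (card (T - S)) * (f Sj' - f Sj)" using s1 s2 s3 s4 by linarith
  then show ?thesis unfolding Sj_def[symmetric] Sj'_def[symmetric] by linarith
qed

lemma greedy_decay:
  assumes nd: "nondecreasing_on V f" and sub: "submodular_on V f" and finV: "finite V"
    and S: "S \<subseteq> V" and T: "T \<subseteq> V" and ST: "S \<subseteq> T"
    and g: "greedy_run f V S xs" and m: "card (T - S) \<ge> 1"
  shows "j \<le> length xs \<Longrightarrow> f T - f (S \<union> set (take j xs)) \<le> (1 - 1 / real (card (T - S))) ^ j * (f T - f S)"
proof (induction j)
  case 0 then show ?case by simp
next
  case (Suc j)
  define m where "m = real (card (T - S))"
  have m1: "m \<ge> 1" using m unfolding m_def by simp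
  define D where "D = f T - f (S \<union> set (take j xs))"
  define D' where "D' = f T - f (S \<union> set (take (Suc j) xs))"
  have st: "D \<le> m * (D - D')"
    using greedy_step[OF nd sub finV S T ST g, of j] Suc.prems unfolding D_def D'_def m_def by simp
  have "D' \<le> (1 - 1/m) * D"
  proof -
    have "D / m \<le> D - D'" using st m1 by (simp add: divide_le_eq mult.commute)
    then show ?thesis by (simp add: algebra_simps)
  qed
  also have "\<dots> \<le> (1 - 1/m) * ((1 - 1/m) ^ j * (f T - f S))"
    using Suc.IH Suc.prems m1 unfolding D_def m_def by (intro mult_left_mono) auto
  finally show ?case unfolding D'_def m_def by simp
qed

lemma greedy_bound:
  assumes nd: "nondecreasing_on V f" and sub: "submodular_on V f" and finV: "finite V"
    and S: "S \<subseteq> V" and O: "OPT \<subseteq> V"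
    and g: "greedy_run f V S xs" and k: "length xs = k" "k \<ge> 1"
  shows "f S + (1 - 1 / exp 1) / real_of_int \<lceil>real (card (OPT - S)) / real k\<rceil>
                   * (f (OPT \<union> S) - f S) \<le> f (S \<union> set xs)"
proof -
  have xsV: "set xs \<subseteq> V" using g unfolding greedy_run_def by auto
  have mono0: "f S \<le> f (S \<union> set xs)" using nd S xsV unfolding nondecreasing_on_def by auto
  show ?thesis
  proof (cases "card (OPT - S) = 0")
    case True
    then have "\<lceil>real (card (OPT - S)) / real k\<rceil> = 0" by simp
    then show ?thesis using mono0 by simp
  next
    case False
    define T where "T = OPT \<union> S"
    have TS: "T - S = OPT - S" unfolding T_def by auto
    define m where "m = real (card (OPT - S))"
    have m1: "m \<ge> 1" using False unfolding m_def by simp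
    define c where "c = real_of_int \<lceil>m / real k\<rceil>"
    have cge: "c \<ge> m / real k" unfolding c_def by linarith
    have mk: "m / real k > 0" using m1 k by simp
    then have "\<lceil>m / real k\<rceil> \<ge> 1" by (simp add: one_le_ceiling) 
    then have c1: "c \<ge> 1" unfolding c_def by simp
    define D0 where "D0 = f T - f S"
    have D0: "D0 \<ge> 0" using nd O S unfolding D0_def T_def nondecreasing_on_def by auto
    have dec: "f T - f (S \<union> set xs) \<le> (1 - 1/m) ^ k * D0"
    proof -
      have TV: "T \<subseteq> V" and ST: "S \<subseteq> T" using O S unfolding T_def by auto
      have c: "card (T - S) \<ge> 1" using False TS by simp
      have "f T - f (S \<union> set (take (length xs) xs)) \<le> (1 - 1 / real (card (T - S))) ^ (length xs) * (f T - f S)"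
        by (rule greedy_decay[OF nd sub finV S TV ST g c]) simp
      then show ?thesis unfolding D0_def m_def TS by (simp add: k(1)[symmetric])
    qed
    have p1: "(1 - 1/m) ^ k \<le> exp (- 1/m) ^ k"
      using exp_ge_add_one_self[of "-1/m"] m1 by (intro power_mono) auto
    have p2: "exp (- 1/m) ^ k = exp (- real k / m)"
    proof -
      have "real k * (-1/m) = - real k / m" by simp
      then show ?thesis using exp_of_nat_mult[of k "-1/m"] by simp
    qed
    have "1/c \<le> real k / m"
    proof -
      have kp: "real k > 0" using k by simp
      have "m \<le> c * real k" using cge kp by (simp add: pos_divide_le_eq)
      then have "m / c \<le> real k" using c1 by (simp add: pos_divide_le_eq mult.commute)
      then have "1 / c * m \<le> real k" by simp
      then show ?thesis using m1 by (simp add: pos_le_divide_eq)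
    qed
    then have p3: "exp (- real k / m) \<le> exp (- (1/c))" by simp
    have p4: "(1/c) * (1 - 1 / exp 1) \<le> 1 - exp (- (1/c))"
      using exp_bound[of "1/c"] c1 by simp
    have key: "(1 - 1 / exp 1) / c \<le> 1 - (1 - 1/m) ^ k" 
    proof -
      have "(1 - 1 / exp 1) / c = 1 / c * (1 - 1 / exp 1)" by simp
      then show ?thesis using p1 p2 p3 p4 by linarith
    qed
    have "(1 - 1 / exp 1) / c * D0 \<le> (1 - (1 - 1/m) ^ k) * D0"
      using key D0 by (intro mult_right_mono) auto
    also have "\<dots> \<le> f (S \<union> set xs) - f S" using dec unfolding D0_def by (simp add: algebra_simps)
    finally show ?thesis unfolding c_def m_def D0_def T_def by simp
  qed
qed

theorem mainTheorem1:
  fixes V :: "'a set" and f :: "'a set \<Rightarrow> real" and b :: nat and A OPT :: "'a set"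
    and As :: "nat \<Rightarrow> 'a set" and Bs :: "nat \<Rightarrow> 'a list" and istar :: nat
  assumes "finite V"
    and "nondecreasing_on V f" and "submodular_on V f"
    and "b \<ge> 1" and "card V \<ge> b"
    and "A \<subseteq> V" and "card A = b"
    and "\<forall>i \<le> b. As i \<subseteq> A \<and> card (As i) = i"
    and "\<forall>i \<le> b. length (Bs i) = b - i \<and> greedy_run f V (As i) (Bs i)"
    and "istar \<le> b"
    and "\<forall>i \<le> b. f (As i \<union> set (Bs i)) \<le> f (As istar \<union> set (Bs istar))"
    and "OPT \<subseteq> V" and "card OPT = b"
    and "\<forall>S. S \<subseteq> V \<and> card S = b \<longrightarrow> f S \<le> f OPT"
  shows "f (As istar \<union> set (Bs istar)) \<ge> f A \<and>
         f (As istar \<union> set (Bs istar)) \<ge>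
           Max ((\<lambda>i. f (As i) + (1 - 1 / exp 1)
                   / real_of_int \<lceil>real (card (OPT - As i)) / real (b - i)\<rceil>
                   * (f (OPT \<union> As i) - f (As i))) ` {..<b})"
proof
  have finA: "finite A" using assms(1,6) finite_subset by blast
  have "As b = A" using card_subset_eq[OF finA, of "As b"] assms(7,8) by auto
  moreover have "set (Bs b) = {}" using assms(9) by auto
  ultimately have "f A = f (As b \<union> set (Bs b))" by simp
  then show "f (As istar \<union> set (Bs istar)) \<ge> f A" using assms(11)[rule_format, of b] by simp
next
  show "f (As istar \<union> set (Bs istar)) \<ge>
           Max ((\<lambda>i. f (As i) + (1 - 1 / exp 1)
                   / real_of_int \<lceil>real (card (OPT - As i)) / real (b - i)\<rceil>
                   * (f (OPT \<union> As i) - f (As i))) ` {..<b})"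
  proof (rule Max.boundedI)
    show "finite ((\<lambda>i. f (As i) + (1 - 1 / exp 1)
                   / real_of_int \<lceil>real (card (OPT - As i)) / real (b - i)\<rceil>
                   * (f (OPT \<union> As i) - f (As i))) ` {..<b})" by simp
    show "(\<lambda>i. f (As i) + (1 - 1 / exp 1)
                   / real_of_int \<lceil>real (card (OPT - As i)) / real (b - i)\<rceil>
                   * (f (OPT \<union> As i) - f (As i))) ` {..<b} \<noteq> {}"
      using assms(4) by (simp add: lessThan_empty_iff)
  next
    fix a assume "a \<in> (\<lambda>i. f (As i) + (1 - 1 / exp 1)
                   / real_of_int \<lceil>real (card (OPT - As i)) / real (b - i)\<rceil>
                   * (f (OPT \<union> As i) - f (As i))) ` {..<b}"
    then obtain i where i: "i < b" and a: "a = f (As i) + (1 - 1 / exp 1)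
                   / real_of_int \<lceil>real (card (OPT - As i)) / real (b - i)\<rceil>
                   * (f (OPT \<union> As i) - f (As i))" by auto
    have k1: "b - i \<ge> 1" using i by simp
    have "As i \<subseteq> A" using assms(8) i by simp
    then have S: "As i \<subseteq> V" using assms(6) by (rule order_trans)
    have g: "greedy_run f V (As i) (Bs i)" and l: "length (Bs i) = b - i" using assms(9) i by auto
    have "a \<le> f (As i \<union> set (Bs i))"
      unfolding a by (rule greedy_bound[OF assms(2,3,1) S assms(12) g l k1])
    also have "\<dots> \<le> f (As istar \<union> set (Bs istar))" using assms(11)[rule_format, of i] i by simp
    finally show "a \<le> f (As istar \<union> set (Bs istar))" .
  qed
qed

end
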